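(* Let $n\ge1$, $0<\hat\theta<1$ with $n\hat\theta$ an integer, and $\alpha>0$ with $\alpha\le n\hat\theta^2(1-\hat\theta)^2/8$. Then there is a solution $\gamma_\alpha>0$ of $-\log P_{\mathrm{CH},n}\big(\hat\theta\,\big|\,\varphi(\gamma_\alpha,\hat\theta)\big)=\alpha$ satisfying $$\gamma_\alpha\in\sqrt{2\alpha}\left(1+\frac52\frac{\sqrt\alpha}{\sqrt{n\hat\theta(1-\hat\theta)}}[-1,1]\right)^{-1/2},$$ i.e. $\sqrt{2\alpha}\,(1+\epsilon)^{-1/2}\le\gamma_\alpha\le\sqrt{2\alpha}\,(1-\epsilon)^{-1/2}$ with $\epsilon=\frac52\sqrt\alpha/\sqrt{n\hat\theta(1-\hat\theta)}$.
   Context: Logarithms are natural. $P_{\mathrm{CH},n}(t|\varphi)=\left(\frac{\varphi}{t}\right)^{nt}\left(\frac{1-\varphi}{1-t}\right)^{n(1-t)}$ if $t\ge\varphi$, and $=1$ otherwise. With $\hat\sigma=\sqrt{\hat\theta(1-\hat\theta)/n}$, $\varphi(\gamma,\hat\theta)=\hat\theta-\hat\sigma\gamma$. *)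

theory Defs
  imports "HOL-Analysis.Analysis"
begin

definition P_CH :: "nat \<Rightarrow> real \<Rightarrow> real \<Rightarrow> real" where
  "P_CH n t \<phi> = (if t \<ge> \<phi>
     then (\<phi> / t) powr (real n * t) * ((1 - \<phi>) / (1 - t)) powr (real n * (1 - t))
     else 1)"

definition sigma_hat :: "nat \<Rightarrow> real \<Rightarrow> real" where
  "sigma_hat n \<theta> = sqrt (\<theta> * (1 - \<theta>) / real n)"

definition varphi :: "nat \<Rightarrow> real \<Rightarrow> real \<Rightarrow> real" where
  "varphi n \<gamma> \<theta> = \<theta> - sigma_hat n \<theta> * \<gamma>"

end

theory Submission imports Defs begin

definition kf :: "real \<Rightarrow> real \<Rightarrow> real" where
  "kf \<theta> t = \<theta> * (ln \<theta> - ln (\<theta> - \<theta>*(1-\<theta>)*t)) + (1-\<theta>) * (ln (1-\<theta>) - ln (1-\<theta> + \<theta>*(1-\<theta>)*t))"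

lemma kf_deriv:
  assumes "0 < \<theta>" "\<theta> < 1" "0 \<le> t" "t < 1"
  shows "(kf \<theta> has_real_derivative
     (\<theta>*(1-\<theta>) * (\<theta>*(1-\<theta>)*t) / ((\<theta> - \<theta>*(1-\<theta>)*t) * (1-\<theta> + \<theta>*(1-\<theta>)*t)))) (at t)"
proof -
  define v where "v = \<theta>*(1-\<theta>)"
  have v: "0 < v" "v < \<theta>" using assms by (auto simp: v_def mult_less_cancel_left1)
  have A: "\<theta> - v * t > 0"
  proof -
    have "v * t \<le> v" using v assms by (simp add: mult_left_le)
    thus ?thesis using v by linarith
  qed
  have B: "1-\<theta> + v * t > 0" using v assms by (simp add: add_pos_nonneg)
  have "((\<lambda>t. \<theta> * (ln \<theta> - ln (\<theta> - v * t)) + (1-\<theta>) * (ln (1-\<theta>) - ln (1-\<theta> + v * t))) has_real_derivative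
     (\<theta> * (0 - (0 - v * 1)/(\<theta> - v * t)) + (1-\<theta>) * (0 - (0 + v * 1)/(1-\<theta>+v * t)))) (at t)"
    using A B by (auto intro!: derivative_eq_intros simp: mult.commute)
  moreover have "\<theta> * (0 - (0 - v * 1)/(\<theta> - v * t)) + (1-\<theta>) * (0 - (0 + v * 1)/(1-\<theta>+v * t))
     = v * (v * t) / ((\<theta> - v * t) * (1-\<theta> + v * t))"
    using A B by (simp add: field_simps v_def)
  ultimately show ?thesis unfolding kf_def v_def[symmetric] by simp
qed

lemma kf0: "kf \<theta> 0 = 0" by (simp add: kf_def)

lemma AB_bounds:
  fixes \<theta> t :: real
  assumes "0 < \<theta>" "\<theta> < 1" "0 \<le> t" "t < 1"
  shows "\<theta>*(1-\<theta>)*(1-t) \<le> (\<theta> - \<theta>*(1-\<theta>)*t) * (1-\<theta> + \<theta>*(1-\<theta>)*t)"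
    "(\<theta> - \<theta>*(1-\<theta>)*t) * (1-\<theta> + \<theta>*(1-\<theta>)*t) \<le> \<theta>*(1-\<theta>)*(1+t)"
proof -
  define v where "v = \<theta>*(1-\<theta>)"
  have tt: "\<theta>*\<theta> > 0" by (rule mult_pos_pos[OF assms(1) assms(1)])
  have v: "0 < v" "v < \<theta>" "v \<le> 1"
    using assms tt by (auto simp: v_def zero_less_mult_iff algebra_simps) (smt (verit) tt)
  have A: "\<theta> - v * t > 0"
  proof -
    have "v * t \<le> v" by (rule mult_left_le) (use v assms in auto)
    thus ?thesis using v by linarith
  qed
  have vt: "v * t \<ge> 0" using v assms by simp
  have "(\<theta> - v * t) * (1-\<theta> + v * t) \<ge> (\<theta> - v * t) * (1-\<theta>)"
    using A vt by (intro mult_left_mono) auto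
  also have "(\<theta> - v * t) * (1-\<theta>) = v - v * t*(1-\<theta>)" by (simp add: v_def algebra_simps)
  also have "v - v * t*(1-\<theta>) \<ge> v * (1-t)"
  proof -
    have "v * t*(1-\<theta>) \<le> v * t" using vt assms by (simp add: mult_left_le)
    thus ?thesis by (simp add: algebra_simps)
  qed
  finally show "\<theta>*(1-\<theta>)*(1-t) \<le> (\<theta> - \<theta>*(1-\<theta>)*t) * (1-\<theta> + \<theta>*(1-\<theta>)*t)"
    unfolding v_def by linarith
  have "(\<theta> - v * t) * (1-\<theta> + v * t) = v + v * t*(2*\<theta>-1) - (v * t)^2"
    by (simp add: v_def algebra_simps power2_eq_square)
  also have "\<dots> \<le> v + v * t" 
  proof -
    have "v * t*(2*\<theta>-1) \<le> v * t" using vt assms by (simp add: mult_left_le)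
    moreover have "(v * t)^2 \<ge> 0" by simp
    ultimately show ?thesis by linarith
  qed
  finally show "(\<theta> - \<theta>*(1-\<theta>)*t) * (1-\<theta> + \<theta>*(1-\<theta>)*t) \<le> \<theta>*(1-\<theta>)*(1+t)"
    unfolding v_def by (simp add: algebra_simps)
qed

lemma kf_upper:
  assumes "0 < \<theta>" "\<theta> < 1" "0 \<le> t" "t \<le> 1/2"
  shows "kf \<theta> t \<le> \<theta>*(1-\<theta>) * (t^2/2 + 2/3*t^3)"
proof -
  define v where "v = \<theta>*(1-\<theta>)"
  have v: "0 < v" using assms by (auto simp: v_def)
  define h where "h = (\<lambda>t. v * (t^2/2 + 2/3*t^3) - kf \<theta> t)"
  have "h 0 \<le> h t"
  proof (rule DERIV_nonneg_imp_nondecreasing[OF assms(3)])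
    fix x assume x: "0 \<le> x" "x \<le> t"
    define D where "D = v * (v * x) / ((\<theta> - v * x) * (1-\<theta> + v * x))"
    have AB: "v * (1-x) \<le> (\<theta> - v * x) * (1-\<theta> + v * x)"
      using AB_bounds(1)[of \<theta> x] assms x unfolding v_def by auto
    have pos: "v * (1-x) > 0" using v x assms by auto
    have "D \<le> v * (v * x) / (v * (1-x))"
      unfolding D_def using AB pos v x by (intro divide_left_mono) auto
    also have "\<dots> = v * (x / (1-x))" using v x assms by (simp add: field_simps)
    also have "\<dots> \<le> v * (x + 2*x^2)"
    proof -
      have "x / (1-x) \<le> x + 2*x^2"
      proof -
        have "x \<le> (x + 2*x^2)*(1-x)"
        proof -
          have "(x + 2*x^2)*(1-x) = x + x^2*(1 - 2*x)" by (simp add: algebra_simps power2_eq_square power3_eq_cube)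
          moreover have "x^2*(1-2*x) \<ge> 0" using x assms by auto
          ultimately show ?thesis by linarith
        qed
        thus ?thesis using x assms by (simp add: divide_le_eq)
      qed
      thus ?thesis using v by (intro mult_left_mono) auto
    qed
    finally have Dle: "D \<le> v * (x + 2*x^2)" .
    have "(h has_real_derivative (v * (2*x/2 + 2/3*(3*x^2)) - D)) (at x)"
      unfolding h_def D_def v_def
      using kf_deriv[of \<theta> x] assms x
      by (auto intro!: derivative_eq_intros simp: power2_eq_square)
    moreover have "v * (2*x/2 + 2/3*(3*x^2)) - D \<ge> 0" using Dle by simp
    ultimately show "\<exists>y. (h has_real_derivative y) (at x) \<and> y \<ge> 0" by blast
  qed
  thus ?thesis unfolding h_def v_def by (simp add: kf0)
qed

lemma kf_lower:
  assumes "0 < \<theta>" "\<theta> < 1" "0 \<le> t" "t < 1"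
  shows "\<theta>*(1-\<theta>) * (t^2/2 - t^3/3) \<le> kf \<theta> t"
proof -
  define v where "v = \<theta>*(1-\<theta>)"
  have v: "0 < v" using assms by (auto simp: v_def)
  define h where "h = (\<lambda>t. kf \<theta> t - v * (t^2/2 - t^3/3))"
  have "h 0 \<le> h t"
  proof (rule DERIV_nonneg_imp_nondecreasing[OF assms(3)])
    fix x assume x: "0 \<le> x" "x \<le> t"
    define D where "D = v * (v * x) / ((\<theta> - v * x) * (1-\<theta> + v * x))"
    have AB: "(\<theta> - v * x) * (1-\<theta> + v * x) \<le> v * (1+x)"
      using AB_bounds(2)[of \<theta> x] assms x unfolding v_def by auto
    have AB1: "v * (1-x) \<le> (\<theta> - v * x) * (1-\<theta> + v * x)"
      using AB_bounds(1)[of \<theta> x] assms x unfolding v_def by auto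
    have pos: "(\<theta> - v * x) * (1-\<theta> + v * x) > 0" using AB1 v x assms
      by (smt (verit) mult_pos_pos)
    have "v * (v * x) / (v * (1+x)) \<le> D"
      unfolding D_def using AB pos v x by (intro divide_left_mono) auto
    moreover have "v * (v * x) / (v * (1+x)) = v * (x / (1+x))"
    proof -
      have "1 + x > 0" using x by simp
      thus ?thesis using v by (simp add: divide_simps)
    qed
    moreover have "v * (x - x^2) \<le> v * (x / (1+x))"
    proof -
      have "x - x^2 \<le> x / (1+x)"
      proof -
        have "(x - x^2)*(1+x) \<le> x"
        proof -
          have "(x - x^2)*(1+x) = x - x^3" by (simp add: algebra_simps power2_eq_square power3_eq_cube)
          moreover have "x^3 \<ge> 0" using x by auto
          ultimately show ?thesis by linarith
        qed
        thus ?thesis using x by (simp add: le_divide_eq)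
      qed
      thus ?thesis using v by (intro mult_left_mono) auto
    qed
    ultimately have Dle: "v * (x - x^2) \<le> D" by linarith
    have "(h has_real_derivative (D - v * (2*x/2 - 3*x^2/3))) (at x)"
      unfolding h_def D_def v_def
      using kf_deriv[of \<theta> x] assms x
      by (auto intro!: derivative_eq_intros simp: power2_eq_square)
    moreover have "D - v * (2*x/2 - 3*x^2/3) \<ge> 0" using Dle by simp
    ultimately show "\<exists>y. (h has_real_derivative y) (at x) \<and> y \<ge> 0" by blast
  qed
  thus ?thesis unfolding h_def v_def by (simp add: kf0)
qed

lemma powr_mhalf: "(x::real) > 0 \<Longrightarrow> x powr (-1/2) = 1 / sqrt x"
proof -
  assume x: "x > 0"
  have "x powr (-1/2) = x powr (-(1/2))" by (simp only: minus_divide_left)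
  also have "\<dots> = inverse (x powr (1/2))" by (rule powr_minus)
  also have "\<dots> = 1 / sqrt x" using x by (simp only: powr_half_sqrt less_imp_le inverse_eq_divide)
  finally show ?thesis .
qed

lemma neg_ln_PCH:
  fixes n :: nat and \<theta> t :: real
  assumes "n \<ge> 1" "0 < \<theta>" "\<theta> < 1" "0 \<le> t" "t < 1"
  shows "- ln (P_CH n \<theta> (\<theta> - \<theta>*(1-\<theta>)*t)) = real n * kf \<theta> t"
proof -
  define v where "v = \<theta>*(1-\<theta>)"
  have tt: "\<theta>*\<theta> > 0" by (rule mult_pos_pos[OF assms(2) assms(2)])
  have v: "0 < v" "v < \<theta>"
    using assms tt by (auto simp: v_def zero_less_mult_iff algebra_simps)
  have vt: "0 \<le> v * t" "v * t < \<theta>"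
  proof -
    show "0 \<le> v * t" using v assms by simp
    have "v * t \<le> v" by (rule mult_left_le) (use v assms in auto)
    thus "v * t < \<theta>" using v by linarith
  qed
  define \<phi> where "\<phi> = \<theta> - v * t"
  have ph: "0 < \<phi>" "\<phi> \<le> \<theta>" "0 < 1 - \<phi>" using vt assms by (auto simp: \<phi>_def)
  have P: "P_CH n \<theta> \<phi> = (\<phi> / \<theta>) powr (real n * \<theta>) * ((1 - \<phi>) / (1 - \<theta>)) powr (real n * (1 - \<theta>))"
    using ph by (simp add: P_CH_def)
  have p1: "(\<phi> / \<theta>) > 0" "((1 - \<phi>) / (1 - \<theta>)) > 0" using ph assms by auto
  have "ln (P_CH n \<theta> \<phi>) = real n * \<theta> * ln (\<phi> / \<theta>) + real n * (1 - \<theta>) * ln ((1 - \<phi>) / (1 - \<theta>))"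
    unfolding P
  proof -
    have "ln ((\<phi> / \<theta>) powr (real n * \<theta>) * ((1 - \<phi>) / (1 - \<theta>)) powr (real n * (1 - \<theta>)))
      = ln ((\<phi> / \<theta>) powr (real n * \<theta>)) + ln (((1 - \<phi>) / (1 - \<theta>)) powr (real n * (1 - \<theta>)))"
      by (rule ln_mult_pos) (use p1 in auto)
    thus "ln ((\<phi> / \<theta>) powr (real n * \<theta>) * ((1 - \<phi>) / (1 - \<theta>)) powr (real n * (1 - \<theta>)))
      = real n * \<theta> * ln (\<phi> / \<theta>) + real n * (1 - \<theta>) * ln ((1 - \<phi>) / (1 - \<theta>))"
      by (simp only: ln_powr)
  qed
  also have "\<dots> = real n * \<theta> * (ln \<phi> - ln \<theta>) + real n * (1 - \<theta>) * (ln (1 - \<phi>) - ln (1 - \<theta>))"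
    using ph assms by (simp add: ln_div)
  finally have "- ln (P_CH n \<theta> \<phi>) = real n * (\<theta> * (ln \<theta> - ln \<phi>) + (1-\<theta>) * (ln (1-\<theta>) - ln (1-\<phi>)))"
    by (simp add: algebra_simps)
  moreover have "kf \<theta> t = \<theta> * (ln \<theta> - ln \<phi>) + (1-\<theta>) * (ln (1-\<theta>) - ln (1-\<phi>))"
  proof -
    have e1: "1 - \<theta> + \<theta>*(1-\<theta>)*t = 1 - \<phi>" by (simp add: \<phi>_def v_def)
    have e2: "\<theta> - \<theta>*(1-\<theta>)*t = \<phi>" by (simp add: \<phi>_def v_def)
    show ?thesis unfolding kf_def e1 e2 ..
  qed
  moreover have "\<theta> - \<theta>*(1-\<theta>)*t = \<phi>" by (simp add: \<phi>_def v_def)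
  ultimately show ?thesis by simp
qed

theorem mainTheorem11:
  fixes n :: nat and \<theta> \<alpha> :: real
  assumes "n \<ge> 1" and "0 < \<theta>" and "\<theta> < 1"
    and "real n * \<theta> \<in> \<int>"
    and "0 < \<alpha>" and "\<alpha> \<le> real n * \<theta>\<^sup>2 * (1 - \<theta>)\<^sup>2 / 8"
  shows "\<exists>\<gamma>>0. - ln (P_CH n \<theta> (varphi n \<gamma> \<theta>)) = \<alpha> \<and>
    (let \<epsilon> = 5 / 2 * sqrt \<alpha> / sqrt (real n * \<theta> * (1 - \<theta>)) in
      sqrt (2 * \<alpha>) * (1 + \<epsilon>) powr (-1/2) \<le> \<gamma> \<and>
      \<gamma> \<le> sqrt (2 * \<alpha>) * (1 - \<epsilon>) powr (-1/2))"
proof -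
  define N where "N = real n"
  define v where "v = \<theta>*(1-\<theta>)"
  have N: "N \<ge> 1" using assms(1) by (simp add: N_def)
  have tt: "\<theta>*\<theta> > 0" by (rule mult_pos_pos[OF assms(2) assms(2)])
  have v: "0 < v" "v \<le> 1/4"
  proof -
    show "0 < v" using assms by (simp add: v_def)
    have "(\<theta> - 1/2)^2 \<ge> 0" by simp
    thus "v \<le> 1/4" by (simp add: v_def power2_eq_square algebra_simps)
  qed
  define s where "s = sqrt (N * v)"
  have s: "s > 0" using N v by (simp add: s_def)
  have s2: "s^2 = N * v" using N v by (simp add: s_def)
  define a where "a = sqrt \<alpha> / s"
  have a: "a > 0" using assms(5) s by (simp add: a_def)
  have a2: "a^2 = \<alpha> / (N * v)" using assms(5) s2 by (simp add: a_def power_divide)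
  have al: "\<alpha> = N * v * a^2" using a2 N v by (simp add: field_simps)
  have a2b: "a^2 \<le> v/8"
  proof -
    have "\<alpha> \<le> N * v^2 / 8" using assms(6) by (simp add: N_def v_def power_mult_distrib)
    hence "N * v * a^2 \<le> N * v * (v/8)" using al by (simp add: power2_eq_square)
    thus ?thesis using N v by simp
  qed
  have a2c: "a^2 \<le> 1/32" using a2b v by simp
  define \<epsilon> where "\<epsilon> = 5/2 * a"
  have eps_eq: "5 / 2 * sqrt \<alpha> / sqrt (real n * \<theta> * (1 - \<theta>)) = \<epsilon>"
    unfolding \<epsilon>_def a_def s_def N_def v_def by (simp add: mult.assoc)
  have a_lt: "a < 1/5"
  proof -
    have "(1/5::real)^2 = 1/25" by (simp add: power2_eq_square)
    hence "a^2 < (1/5)^2" using a2c by linarith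
    thus ?thesis by (rule power_less_imp_less_base) simp
  qed
  have eps: "0 < \<epsilon>" "\<epsilon> < 1/2" using a a_lt by (auto simp: \<epsilon>_def)
  have sq2: "sqrt (2 * \<alpha>) = sqrt 2 * a * s"
    using s by (simp add: a_def real_sqrt_mult)
  define tL where "tL = sqrt 2 * a / sqrt (1+\<epsilon>)"
  define tU where "tU = sqrt 2 * a / sqrt (1-\<epsilon>)"
  have tL2: "tL^2 = 2*a^2/(1+\<epsilon>)" using eps by (simp add: tL_def power_divide power_mult_distrib)
  have tU2: "tU^2 = 2*a^2/(1-\<epsilon>)" using eps by (simp add: tU_def power_divide power_mult_distrib)
  have tLpos: "tL > 0" using a eps by (simp add: tL_def)
  have tUpos: "tU > 0" using a eps by (simp add: tU_def)
  have tLU: "tL \<le> tU"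
    unfolding tL_def tU_def using a eps
    by (intro divide_left_mono) (auto simp: mult_pos_pos)
  have tL2b: "tL^2 \<le> 2*a^2" unfolding tL2 using eps a by (simp add: divide_le_eq)
  have tU2b: "tU^2 \<le> 4*a^2" unfolding tU2 using eps a by (simp add: divide_le_eq)
  have tLh: "tL \<le> 1/2"
  proof -
    have "(1/2::real)^2 = 1/4" by (simp add: power2_eq_square)
    hence "tL^2 \<le> (1/2)^2" using tL2b a2c by linarith
    thus ?thesis by (rule power2_le_imp_le) simp
  qed
  have tU1: "tU < 1"
  proof -
    have "tU^2 < 1^2" using tU2b a2c by simp
    thus ?thesis by (rule power_less_imp_less_base) simp
  qed
  have cL: "4/3 * tL \<le> \<epsilon>"
  proof -
    have e1: "(4/3 * tL)^2 = 16/9 * tL^2" by (simp add: power2_eq_square)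
    have e2: "\<epsilon>^2 = 25/4 * a^2" by (simp add: power2_eq_square \<epsilon>_def)
    have "(4/3 * tL)^2 \<le> \<epsilon>^2" unfolding e1 e2 using tL2b zero_le_power2[of a] by linarith
    thus ?thesis by (rule power2_le_imp_le) (use eps in simp)
  qed
  have cU: "2/3 * tU \<le> \<epsilon>"
  proof -
    have e1: "(2/3 * tU)^2 = 4/9 * tU^2" by (simp add: power2_eq_square)
    have e2: "\<epsilon>^2 = 25/4 * a^2" by (simp add: power2_eq_square \<epsilon>_def)
    have "(2/3 * tU)^2 \<le> \<epsilon>^2" unfolding e1 e2 using tU2b zero_le_power2[of a] by linarith
    thus ?thesis by (rule power2_le_imp_le) (use eps in simp)
  qed
  define G where "G = (\<lambda>t. N * kf \<theta> t)"
  have GL: "G tL \<le> \<alpha>"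
  proof -
    have "G tL \<le> N * (v * (tL^2/2 + 2/3*tL^3))"
      unfolding G_def v_def using kf_upper[of \<theta> tL] assms tLpos tLh N
      by (intro mult_left_mono) auto
    also have "\<dots> = N * v * (tL^2/2) * (1 + 4/3*tL)" by (simp add: algebra_simps power2_eq_square power3_eq_cube)
    also have "\<dots> \<le> N * v * (tL^2/2) * (1 + \<epsilon>)"
    proof (rule mult_left_mono)
      show "0 \<le> N * v * (tL^2/2)" using N v by simp
    qed (use cL in simp)
    also have "\<dots> = \<alpha>" unfolding al tL2 using eps by (simp add: field_simps)
    finally show ?thesis .
  qed
  have GU: "\<alpha> \<le> G tU"
  proof -
    have "N * (v * (tU^2/2 - tU^3/3)) \<le> G tU"
      unfolding G_def v_def using kf_lower[of \<theta> tU] assms tUpos tU1 N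
      by (intro mult_left_mono) auto
    moreover have "N * (v * (tU^2/2 - tU^3/3)) = N * v * (tU^2/2) * (1 - 2/3*tU)" by (simp add: algebra_simps power2_eq_square power3_eq_cube)
    moreover have "N * v * (tU^2/2) * (1 - \<epsilon>) \<le> N * v * (tU^2/2) * (1 - 2/3*tU)"
    proof (rule mult_left_mono)
      show "0 \<le> N * v * (tU^2/2)" using N v by simp
    qed (use cU in simp)
    moreover have "N * v * (tU^2/2) * (1 - \<epsilon>) = \<alpha>" unfolding al tU2 using eps by (simp add: field_simps)
    ultimately show ?thesis by linarith
  qed
  have cont: "\<forall>x. tL \<le> x \<and> x \<le> tU \<longrightarrow> isCont G x"
  proof (intro allI impI)
    fix x assume x: "tL \<le> x \<and> x \<le> tU"
    have "isCont (kf \<theta>) x"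
      by (rule DERIV_isCont[OF kf_deriv]) (use x tLpos tU1 assms in auto)
    thus "isCont G x" unfolding G_def by (intro continuous_intros)
  qed
  obtain t where t: "tL \<le> t" "t \<le> tU" "G t = \<alpha>"
    using IVT[of G tL \<alpha> tU, OF GL GU tLU cont] by blast
  define \<gamma> where "\<gamma> = s * t"
  have gpos: "\<gamma> > 0" using s t tLpos by (simp add: \<gamma>_def)
  have sig: "sigma_hat n \<theta> * s = v"
  proof -
    have "sigma_hat n \<theta> * s = sqrt (v / N) * sqrt (N * v)"
      unfolding sigma_hat_def s_def N_def v_def by (rule refl)
    also have "\<dots> = sqrt (v / N * (N * v))" by (rule real_sqrt_mult[symmetric])
    also have "v / N * (N * v) = v^2" using N by (simp add: power2_eq_square)
    finally show ?thesis using v by simp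
  qed
  have vphi: "varphi n \<gamma> \<theta> = \<theta> - \<theta>*(1-\<theta>)*t"
    unfolding varphi_def \<gamma>_def using sig by (simp add: v_def mult.assoc[symmetric])
  have val: "- ln (P_CH n \<theta> (varphi n \<gamma> \<theta>)) = \<alpha>"
    unfolding vphi using neg_ln_PCH[of n \<theta> t] assms t tLpos tU1 G_def N_def by auto
  have lo: "sqrt (2 * \<alpha>) * (1 + \<epsilon>) powr (-1/2) \<le> \<gamma>"
  proof -
    have pw: "(1 + \<epsilon>) powr (-1/2) = 1 / sqrt (1 + \<epsilon>)" by (rule powr_mhalf) (use eps in simp)
    have "sqrt (2 * \<alpha>) * (1 + \<epsilon>) powr (-1/2) = s * tL"
      unfolding pw sq2 tL_def by simp
    thus ?thesis using t s unfolding \<gamma>_def by (simp add: mult_left_mono)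
  qed
  have hi: "\<gamma> \<le> sqrt (2 * \<alpha>) * (1 - \<epsilon>) powr (-1/2)"
  proof -
    have pw: "(1 - \<epsilon>) powr (-1/2) = 1 / sqrt (1 - \<epsilon>)" by (rule powr_mhalf) (use eps in simp)
    have "sqrt (2 * \<alpha>) * (1 - \<epsilon>) powr (-1/2) = s * tU"
      unfolding pw sq2 tU_def by simp
    thus ?thesis using t s unfolding \<gamma>_def by (simp add: mult_left_mono)
  qed
  show ?thesis unfolding Let_def eps_eq using gpos val lo hi by blast
qed

end
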